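(* Let $\{W_i\}_{i=1}^M$ be subspaces of $\mathbb{R}^N$ that do phase retrieval (respectively, norm retrieval). Suppose that for each $i\in\{1,\dots,M\}$, $W_i=U_i\oplus V_i$, where $U_i,V_i$ are subspaces with $U_i\perp V_i$. Then the family of subspaces $\{U_i\}_{i=1}^M\cup\{V_i\}_{i=1}^M$ does phase retrieval (respectively, norm retrieval) in $\mathbb{R}^N$.
   Context: A family of subspaces $\{W_i\}_{i=1}^M$ of $\mathbb{R}^N$ with orthogonal projections $\{P_i\}_{i=1}^M$ does phase retrieval (respectively, norm retrieval) if for all $x,y\in\mathbb{R}^N$, $\|P_ix\|=\|P_iy\|$ for all $i$ implies $x=\pm y$ (respectively, $\|x\|=\|y\|$). *)

theory Defs
  imports "HOL-Analysis.Analysis"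
begin

definition orth_proj :: "'a::euclidean_space set \<Rightarrow> 'a \<Rightarrow> 'a" where
  "orth_proj W x = (THE p. p \<in> W \<and> (\<forall>w\<in>W. orthogonal (x - p) w))"

definition does_phase_retrieval :: "'i set \<Rightarrow> ('i \<Rightarrow> 'a::euclidean_space set) \<Rightarrow> bool" where
  "does_phase_retrieval I W \<longleftrightarrow>
     (\<forall>x y. (\<forall>i\<in>I. norm (orth_proj (W i) x) = norm (orth_proj (W i) y))
            \<longrightarrow> x = y \<or> x = - y)"

definition does_norm_retrieval :: "'i set \<Rightarrow> ('i \<Rightarrow> 'a::euclidean_space set) \<Rightarrow> bool" where
  "does_norm_retrieval I W \<longleftrightarrow>
     (\<forall>x y. (\<forall>i\<in>I. norm (orth_proj (W i) x) = norm (orth_proj (W i) y))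
            \<longrightarrow> norm x = norm y)"

end

theory Submission
  imports Defs
begin

lemma proj_unique:
  fixes S :: "'a::euclidean_space set"
  assumes "subspace S" "p \<in> S" "\<forall>w\<in>S. orthogonal (x - p) w"
    "q \<in> S" "\<forall>w\<in>S. orthogonal (x - q) w"
  shows "p = q"
proof -
  have d: "p - q \<in> S" using assms by (simp add: subspace_diff)
  have "orthogonal (x - q) (p - q)" "orthogonal (x - p) (p - q)" using assms d by auto
  then have "(p - q) \<bullet> (p - q) = 0"
    by (simp add: orthogonal_def inner_diff_left inner_diff_right algebra_simps)
  then show ?thesis by simp
qed

lemma proj_props:
  fixes S :: "'a::euclidean_space set"
  assumes "subspace S"
  shows "orth_proj S x \<in> S \<and> (\<forall>w\<in>S. orthogonal (x - orth_proj S x) w)"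
proof -
  obtain y z where y: "y \<in> span S" and z: "\<And>w. w \<in> span S \<Longrightarrow> orthogonal z w" and e: "x = y + z"
    by (metis orthogonal_subspace_decomp_exists)
  have yS: "y \<in> S" using y assms span_eq_iff by blast
  have xy: "x - y = z" using e by simp
  have P: "y \<in> S \<and> (\<forall>w\<in>S. orthogonal (x - y) w)"
    using yS z span_base unfolding xy by blast
  have "orth_proj S x = y" unfolding orth_proj_def
  proof (rule the_equality)
    show "y \<in> S \<and> (\<forall>w\<in>S. orthogonal (x - y) w)" using P .
    fix p assume "p \<in> S \<and> (\<forall>w\<in>S. orthogonal (x - p) w)"
    then show "p = y" using proj_unique[OF assms, of p x y] P by blast
  qed
  with P show ?thesis by simp
qed

lemma proj_char:
  fixes S :: "'a::euclidean_space set"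
  assumes "subspace S" "p \<in> S" "\<forall>w\<in>S. orthogonal (x - p) w"
  shows "orth_proj S x = p"
  using proj_unique[OF assms] proj_props[OF assms(1)] by metis

lemma proj_sum_norm:
  fixes U V W :: "'a::euclidean_space set"
  assumes sU: "subspace U" and sV: "subspace V"
    and o: "\<forall>u\<in>U. \<forall>v\<in>V. orthogonal u v"
    and W: "W = {u + v | u v. u \<in> U \<and> v \<in> V}"
    and sW: "subspace W"
  shows "(norm (orth_proj W x))\<^sup>2 = (norm (orth_proj U x))\<^sup>2 + (norm (orth_proj V x))\<^sup>2"
proof -
  let ?pu = "orth_proj U x" and ?pv = "orth_proj V x"
  have pu: "?pu \<in> U" "\<forall>w\<in>U. orthogonal (x - ?pu) w" using proj_props[OF sU] by auto
  have pv: "?pv \<in> V" "\<forall>w\<in>V. orthogonal (x - ?pv) w" using proj_props[OF sV] by auto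
  have ouv: "orthogonal ?pu ?pv" using o pu pv by auto
  have "orth_proj W x = ?pu + ?pv"
  proof (rule proj_char[OF sW])
    show "?pu + ?pv \<in> W" using W pu pv by blast
    show "\<forall>w\<in>W. orthogonal (x - (?pu + ?pv)) w"
    proof
      fix w assume "w \<in> W"
      then obtain u v where uv: "u \<in> U" "v \<in> V" "w = u + v" using W by blast
      have a: "(x - ?pu) \<bullet> u = 0" "(x - ?pv) \<bullet> v = 0"
        using pu pv uv by (auto simp: orthogonal_def)
      have b: "?pv \<bullet> u = 0" "?pu \<bullet> v = 0"
        using o pu pv uv by (auto simp: orthogonal_def inner_commute)
      show "orthogonal (x - (?pu + ?pv)) w"
        using a b uv unfolding orthogonal_def
        by (simp add: inner_diff_left inner_add_left inner_add_right algebra_simps)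
    qed
  qed
  then show ?thesis using norm_add_Pythagorean[OF ouv] by simp
qed

theorem mainTheorem10:
  fixes W U V :: "nat \<Rightarrow> (real ^ 'n) set" and M :: nat
  assumes subW: "\<forall>i\<in>{1..M}. subspace (W i)"
    and subU: "\<forall>i\<in>{1..M}. subspace (U i)"
    and subV: "\<forall>i\<in>{1..M}. subspace (V i)"
    and orthUV: "\<forall>i\<in>{1..M}. \<forall>u\<in>U i. \<forall>v\<in>V i. orthogonal u v"
    and sumUV: "\<forall>i\<in>{1..M}. W i = {u + v | u v. u \<in> U i \<and> v \<in> V i}"
  shows "(does_phase_retrieval {1..M} W \<longrightarrow>
            does_phase_retrieval ({1..M} <+> {1..M}) (case_sum U V))
       \<and> (does_norm_retrieval {1..M} W \<longrightarrow>
            does_norm_retrieval ({1..M} <+> {1..M}) (case_sum U V))"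
proof -
  have key: "\<forall>i\<in>{1..M}. norm (orth_proj (W i) x) = norm (orth_proj (W i) y)"
    if h: "\<forall>j\<in>{1..M} <+> {1..M}. norm (orth_proj (case_sum U V j) x) = norm (orth_proj (case_sum U V j) y)"
    for x y :: "real ^ 'n"
  proof
    fix i assume i: "i \<in> {1..M}"
    have hu: "norm (orth_proj (U i) x) = norm (orth_proj (U i) y)"
      using h i by (metis InlI sum.simps(5))
    have hv: "norm (orth_proj (V i) x) = norm (orth_proj (V i) y)"
      using h i by (metis InrI sum.simps(6))
    have "(norm (orth_proj (W i) x))\<^sup>2 = (norm (orth_proj (W i) y))\<^sup>2"
      using proj_sum_norm[of "U i" "V i" "W i"] subU subV orthUV sumUV subW i hu hv by simp
    then show "norm (orth_proj (W i) x) = norm (orth_proj (W i) y)"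
      by (simp add: power2_eq_iff_nonneg)
  qed
  show ?thesis
  proof (intro conjI impI)
    assume "does_phase_retrieval {1..M} W"
    then show "does_phase_retrieval ({1..M} <+> {1..M}) (case_sum U V)"
      unfolding does_phase_retrieval_def using key by meson
  next
    assume "does_norm_retrieval {1..M} W"
    then show "does_norm_retrieval ({1..M} <+> {1..M}) (case_sum U V)"
      unfolding does_norm_retrieval_def using key by meson
  qed
qed

end
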